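(* Let $\odot$ be a non-degenerate pseudo-multiplication on $[0,\infty]$ with left identity $1_{\odot}$. For $t\in[0,\infty]$ the following conditions are equivalent: (1) $t$ is $\odot$-finite; (2) $s\odot t$ is $\odot$-finite for some $s>0$; (3) $s\odot t\leqslant 1_{\odot}$ for some $s>0$; (4) $t\odot s'\leqslant 1_{\odot}$ for some $s'>0$; (5) $t\odot s'$ is $\odot$-finite for some $s'>0$.
   Context: A pseudo-multiplication is a binary operation $\odot:[0,\infty]\times[0,\infty]\to[0,\infty]$ such that: $\odot$ is associative; $\odot$ is continuous on $(0,\infty)\times[0,\infty]$; for every $t$, the map $s\mapsto s\odot t$ is continuous on $(0,\infty]$; $\odot$ is nondecreasing in each argument; there is a left identity element $1_{\odot}$, i.e. $1_{\odot}\odot t=t$ for all $t$; there are no zero divisors, i.e. $s\odot t=0$ implies $s=0$ or $t=0$; and $0$ is an annihilator, i.e. $0\odot t=t\odot 0=0$ for all $t$. For $t\in[0,\infty]$ put $O(t)=\inf_{s>0} s\odot t$. An element $t$ is called $\odot$-finite if $O(t)=0$, and $\odot$-infinite otherwise. The pseudo-multiplication $\odot$ is called non-degenerate if $O(1_{\odot})=0$. *)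

theory Defs
  imports "HOL-Analysis.Analysis" "HOL-Library.Extended_Nonnegative_Real"
begin

definition pseudo_mult :: "(ennreal \<Rightarrow> ennreal \<Rightarrow> ennreal) \<Rightarrow> ennreal \<Rightarrow> bool" where
  "pseudo_mult f e \<longleftrightarrow>
     (\<forall>a b c. f (f a b) c = f a (f b c)) \<and>
     continuous_on ({0<..<\<infinity>} \<times> UNIV) (\<lambda>(s, t). f s t) \<and>
     (\<forall>t. continuous_on {0<..} (\<lambda>s. f s t)) \<and>
     (\<forall>a b c. a \<le> b \<longrightarrow> f a c \<le> f b c) \<and>
     (\<forall>a b c. a \<le> b \<longrightarrow> f c a \<le> f c b) \<and>
     (\<forall>t. f e t = t) \<and>
     (\<forall>s t. f s t = 0 \<longrightarrow> s = 0 \<or> t = 0) \<and>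
     (\<forall>t. f 0 t = 0 \<and> f t 0 = 0)"

definition pm_O :: "(ennreal \<Rightarrow> ennreal \<Rightarrow> ennreal) \<Rightarrow> ennreal \<Rightarrow> ennreal" where
  "pm_O f t = (INF s\<in>{0<..}. f s t)"

definition pm_finite :: "(ennreal \<Rightarrow> ennreal \<Rightarrow> ennreal) \<Rightarrow> ennreal \<Rightarrow> bool" where
  "pm_finite f t \<longleftrightarrow> pm_O f t = 0"

definition pm_nondegenerate :: "(ennreal \<Rightarrow> ennreal \<Rightarrow> ennreal) \<Rightarrow> ennreal \<Rightarrow> bool" where
  "pm_nondegenerate f e \<longleftrightarrow> pm_O f e = 0"

end

theory Submission
  imports Defs
begin

theorem proposition2p4:
  fixes f :: "ennreal \<Rightarrow> ennreal \<Rightarrow> ennreal" and e t :: ennreal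
  assumes "pseudo_mult f e" and "pm_nondegenerate f e"
  shows "(pm_finite f t \<longleftrightarrow> (\<exists>s>0. pm_finite f (f s t)))
       \<and> (pm_finite f t \<longleftrightarrow> (\<exists>s>0. f s t \<le> e))
       \<and> (pm_finite f t \<longleftrightarrow> (\<exists>s'>0. f t s' \<le> e))
       \<and> (pm_finite f t \<longleftrightarrow> (\<exists>s'>0. pm_finite f (f t s')))"
proof -
  note P = assms(1)[unfolded pseudo_mult_def]
  have assoc: "\<And>a b c. f (f a b) c = f a (f b c)" using P by (elim conjE) simp
  have cont: "continuous_on ({0<..<\<infinity>} \<times> UNIV) (\<lambda>(s, t). f s t)" using P by (elim conjE)
  have mono1: "\<And>a b c. a \<le> b \<Longrightarrow> f a c \<le> f b c" using P by (elim conjE) simp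
  have mono2: "\<And>a b c. a \<le> b \<Longrightarrow> f c a \<le> f c b" using P by (elim conjE) simp
  have lid: "\<And>t. f e t = t" using P by (elim conjE) simp
  have nzd: "\<And>s t. f s t = 0 \<Longrightarrow> s = 0 \<or> t = 0" using P by (elim conjE) simp
  have ann: "\<And>t. f 0 t = 0 \<and> f t 0 = 0" using P by (elim conjE) simp
  have Oe: "pm_O f e = 0" using assms(2) by (simp add: pm_nondegenerate_def)
  have pos: "\<And>a b. a > 0 \<Longrightarrow> b > 0 \<Longrightarrow> f a b > 0"
  proof -
    fix a b :: ennreal assume "a > 0" "b > 0"
    then have "f a b \<noteq> 0" using nzd by force
    then show "f a b > 0" by (simp add: zero_less_iff_neq_zero)
  qed
  have epos: "e > 0"
  proof (rule ccontr)
    assume "\<not> e > 0" then have "e = 0" by simp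
    then have "f 0 1 = 1" using lid[of 1] by simp
    then show False using ann by simp
  qed
  have le_e: "\<And>x. x \<le> e \<Longrightarrow> pm_finite f x"
  proof -
    fix x assume "x \<le> e"
    have "pm_O f x \<le> pm_O f e" unfolding pm_O_def
      by (rule INF_mono) (use \<open>x \<le> e\<close> mono2 in blast)
    then show "pm_finite f x" using Oe by (simp add: pm_finite_def)
  qed
  have F3: "pm_finite f t \<Longrightarrow> \<exists>s>0. f s t < e"
  proof -
    assume "pm_finite f t"
    then have "(INF s\<in>{0<..}. f s t) < e" using epos by (simp add: pm_finite_def pm_O_def)
    then obtain s where "s \<in> {0<..}" "f s t < e" by (auto simp: INF_less_iff)
    then show ?thesis by auto
  qed
  have C2F: "\<And>s. s > 0 \<Longrightarrow> pm_finite f (f s t) \<Longrightarrow> pm_finite f t"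
  proof -
    fix s :: ennreal assume s: "s > 0" and h: "pm_finite f (f s t)"
    have "pm_O f t \<le> pm_O f (f s t)" unfolding pm_O_def
    proof (rule INF_mono)
      fix r :: ennreal assume "r \<in> {0<..}"
      then have "f r s \<in> {0<..}" using pos s by simp
      moreover have "f (f r s) t \<le> f r (f s t)" using assoc[of r s t] by simp
      ultimately show "\<exists>n\<in>{0<..}. f n t \<le> f r (f s t)" by blast
    qed
    then show "pm_finite f t" using h by (simp add: pm_finite_def)
  qed
  have C5F: "\<And>s. s > 0 \<Longrightarrow> pm_finite f (f t s) \<Longrightarrow> pm_finite f t"
  proof (rule ccontr)
    fix s :: ennreal assume s: "s > 0" and h: "pm_finite f (f t s)" and n: "\<not> pm_finite f t"
    define c where "c = pm_O f t"
    have c: "c > 0" using n by (simp add: c_def pm_finite_def zero_less_iff_neq_zero)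
    have "f c s \<le> pm_O f (f t s)" unfolding pm_O_def
    proof (rule INF_greatest)
      fix r :: ennreal assume r: "r \<in> {0<..}"
      have "c \<le> f r t" unfolding c_def pm_O_def by (rule INF_lower[OF r])
      then have "f c s \<le> f (f r t) s" by (rule mono1)
      then show "f c s \<le> f r (f t s)" using assoc[of r t s] by simp
    qed
    moreover have "f c s > 0" using pos c s by simp
    ultimately show False using h by (simp add: pm_finite_def)
  qed
  have F4: "pm_finite f t \<Longrightarrow> \<exists>s'>0. f t s' \<le> e"
  proof -
    assume fin: "pm_finite f t"
    show ?thesis
    proof (cases "t = 0 \<or> e = \<infinity>")
      case True
      then have "f t 1 \<le> e" using ann by (auto simp del: ennreal_1)
      then show ?thesis by (intro exI[of _ 1]) simp
    next
      case False
      then have t0: "t > 0" and einf: "e < \<infinity>" by (auto simp: top.not_eq_extremum zero_less_iff_neq_zero)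
      obtain s where s: "s > 0" "f s t < e" using F3 fin by blast
      define a where "a = f s t"
      have a: "a \<in> {0<..<\<infinity>}" using s einf pos t0 a_def by auto
      show ?thesis
      proof (rule ccontr)
        assume "\<not> ?thesis"
        then have ge: "\<And>w. w > 0 \<Longrightarrow> e \<le> f t w" by (metis linorder_le_less_linear order_less_imp_le)
        define c where "c = f s e"
        have c: "c > 0" using pos s epos c_def by simp
        have low: "\<And>w. w > 0 \<Longrightarrow> c \<le> f a w"
        proof -
          fix w :: ennreal assume "w > 0"
          then have "f s e \<le> f s (f t w)" using ge mono2 by blast
          then show "c \<le> f a w" unfolding a_def c_def using assoc[of s t w] by simp
        qed
        have cg: "continuous_on UNIV (\<lambda>y. f a y)"
        proof -
          have "continuous_on UNIV (\<lambda>y. (\<lambda>(s, t). f s t) (a, y))"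
            by (rule continuous_on_compose2[OF cont]) (use a in \<open>auto intro!: continuous_intros\<close>)
          then show ?thesis by simp
        qed
        then have ic: "isCont (\<lambda>y. f a y) 0" by (simp add: continuous_on_eq_continuous_at)
        have sq: "(\<lambda>n. ennreal (1 / real (Suc n))) \<longlonglongrightarrow> 0"
          using tendsto_ennrealI[OF LIMSEQ_inverse_real_of_nat] by (simp add: divide_inverse)
        have "(\<lambda>n. f a (ennreal (1 / real (Suc n)))) \<longlonglongrightarrow> f a 0"
          by (rule isCont_tendsto_compose[OF ic sq])
        then have "(\<lambda>n. f a (ennreal (1 / real (Suc n)))) \<longlonglongrightarrow> 0" using ann by simp
        then have "eventually (\<lambda>n. f a (ennreal (1 / real (Suc n))) < c) sequentially"
          using c by (rule order_tendstoD)
        then obtain n where "f a (ennreal (1 / real (Suc n))) < c"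
          unfolding eventually_sequentially by blast
        moreover have "c \<le> f a (ennreal (1 / real (Suc n)))" by (rule low) simp
        ultimately show False by simp
      qed
    qed
  qed
  have F3': "pm_finite f t \<Longrightarrow> \<exists>s>0. f s t \<le> e" using F3 less_imp_le by blast
  show ?thesis
    using F3' F4 le_e C2F C5F by blast
qed

end
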